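(* Let $q$ and $d$ be positive integers. Suppose a box $B$ of height $h$ contains a packing of rectangles, each of width $1$ and height at least $h/d$, and such that the rectangles have at most $q$ distinct heights. Then there is a packing of all these rectangles into at most $d(q+1)^d$ vertical containers packed inside $B$, such that the total area of the containers equals the total area of the rectangles. Symmetrically, if a box $B$ of width $w$ contains a packing of rectangles, each of height $1$ and width at least $w/d$, with at most $q$ distinct widths, then all of them can be packed into at most $d(q+1)^d$ horizontal containers packed inside $B$ whose total area equals the total area of the rectangles.
   Context: A box is an axis-aligned rectangular region; rectangles are packed axis-parallel, without rotation, with pairwise disjoint interiors and integer coordinates. A vertical container is an axis-aligned rectangular region in which rectangles are packed one next to the other from left to right, so that every vertical line meets at most one packed rectangle; a horizontal container is one in which rectangles are packed one on top of the other from bottom to top, so that every horizontal line meets at most one packed rectangle. *)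

theory Defs
  imports Main
begin

text \<open>A box (axis-aligned rectangular region with integer coordinates) is encoded as
  (x, y, w, h): lower-left corner (x, y), width w, height h.
  Its region is [x, x+w] \<times> [y, y+h].\<close>

type_synonym box = "int \<times> int \<times> nat \<times> nat"

definition bx :: "box \<Rightarrow> int" where "bx b = fst b"
definition by' :: "box \<Rightarrow> int" where "by' b = fst (snd b)"
definition bw :: "box \<Rightarrow> nat" where "bw b = fst (snd (snd b))"
definition bh :: "box \<Rightarrow> nat" where "bh b = snd (snd (snd b))"

definition area :: "box \<Rightarrow> nat" where "area b = bw b * bh b"

definition open_overlap :: "int \<Rightarrow> nat \<Rightarrow> int \<Rightarrow> nat \<Rightarrow> bool" where
  "open_overlap a l c k \<longleftrightarrow> a < c + int k \<and> c < a + int l"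

definition inside :: "box \<Rightarrow> box \<Rightarrow> bool" where
  "inside b1 b2 \<longleftrightarrow> bx b2 \<le> bx b1 \<and> bx b1 + int (bw b1) \<le> bx b2 + int (bw b2)
     \<and> by' b2 \<le> by' b1 \<and> by' b1 + int (bh b1) \<le> by' b2 + int (bh b2)"

definition interiors_disjoint :: "box \<Rightarrow> box \<Rightarrow> bool" where
  "interiors_disjoint b1 b2 \<longleftrightarrow>
     \<not> (open_overlap (bx b1) (bw b1) (bx b2) (bw b2) \<and> open_overlap (by' b1) (bh b1) (by' b2) (bh b2))"

definition packing :: "box \<Rightarrow> 'i set \<Rightarrow> ('i \<Rightarrow> box) \<Rightarrow> bool" where
  "packing B I P \<longleftrightarrow> (\<forall>i\<in>I. 0 < bw (P i) \<and> 0 < bh (P i) \<and> inside (P i) B) \<and>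
     (\<forall>i\<in>I. \<forall>j\<in>I. i \<noteq> j \<longrightarrow> interiors_disjoint (P i) (P j))"

definition containers_packed :: "box \<Rightarrow> nat \<Rightarrow> (nat \<Rightarrow> box) \<Rightarrow> bool" where
  "containers_packed B m C \<longleftrightarrow> (\<forall>k<m. inside (C k) B) \<and>
     (\<forall>k<m. \<forall>l<m. k \<noteq> l \<longrightarrow> interiors_disjoint (C k) (C l))"

text \<open>Rectangles of I are repacked by P' (same sizes as in P, no rotation), rectangle i
  into container C (f i) with f i < m, each container being vertical: every vertical line
  meets at most one rectangle of the container (open x-projections pairwise disjoint).\<close>
definition vertical_container_packing ::
  "'i set \<Rightarrow> ('i \<Rightarrow> box) \<Rightarrow> nat \<Rightarrow> (nat \<Rightarrow> box) \<Rightarrow> ('i \<Rightarrow> nat) \<Rightarrow> ('i \<Rightarrow> box) \<Rightarrow> bool" where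
  "vertical_container_packing I P m C f P' \<longleftrightarrow>
     (\<forall>i\<in>I. f i < m \<and> bw (P' i) = bw (P i) \<and> bh (P' i) = bh (P i) \<and> inside (P' i) (C (f i))) \<and>
     (\<forall>i\<in>I. \<forall>j\<in>I. i \<noteq> j \<and> f i = f j \<longrightarrow>
        \<not> open_overlap (bx (P' i)) (bw (P' i)) (bx (P' j)) (bw (P' j)))"

definition horizontal_container_packing ::
  "'i set \<Rightarrow> ('i \<Rightarrow> box) \<Rightarrow> nat \<Rightarrow> (nat \<Rightarrow> box) \<Rightarrow> ('i \<Rightarrow> nat) \<Rightarrow> ('i \<Rightarrow> box) \<Rightarrow> bool" where
  "horizontal_container_packing I P m C f P' \<longleftrightarrow>
     (\<forall>i\<in>I. f i < m \<and> bw (P' i) = bw (P i) \<and> bh (P' i) = bh (P i) \<and> inside (P' i) (C (f i))) \<and>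
     (\<forall>i\<in>I. \<forall>j\<in>I. i \<noteq> j \<and> f i = f j \<longrightarrow>
        \<not> open_overlap (by' (P' i)) (bh (P' i)) (by' (P' j)) (bh (P' j)))"

end

theory Submission
  imports Defs
begin


lemma intervals_sum:
  fixes a :: "'i \<Rightarrow> int" and l :: "'i \<Rightarrow> nat"
  assumes "finite S"
    and "\<forall>i\<in>S. 0 < l i \<and> y0 \<le> a i \<and> a i + int (l i) \<le> T"
    and "\<forall>i\<in>S. \<forall>j\<in>S. i \<noteq> j \<longrightarrow> \<not> open_overlap (a i) (l i) (a j) (l j)"
    and "y0 \<le> T"
  shows "int (sum l S) \<le> T - y0"
  using assms(1,2,3,4)
proof (induction S arbitrary: T rule: finite_psubset_induct)
  case (psubset S)
  have fS: "finite S" by (rule psubset.hyps(1))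
  have P1: "\<forall>i\<in>S. 0 < l i \<and> y0 \<le> a i \<and> a i + int (l i) \<le> T" by (rule psubset.prems(1))
  have P2: "\<forall>i\<in>S. \<forall>j\<in>S. i \<noteq> j \<longrightarrow> \<not> open_overlap (a i) (l i) (a j) (l j)"
    by (rule psubset.prems(2))
  have P3: "y0 \<le> T" by (rule psubset.prems(3))
  show ?case
  proof (cases "S = {}")
    case True then show ?thesis using P3 by simp
  next
    case False
    have "Max (a ` S) \<in> a ` S" using False fS by simp
    then obtain i where i: "i \<in> S" "a i = Max (a ` S)" by auto
    have amax: "a j \<le> a i" if "j \<in> S" for j using i fS that by simp
    have sub: "\<forall>j\<in>S - {i}. 0 < l j \<and> y0 \<le> a j \<and> a j + int (l j) \<le> a i"
    proof
      fix j assume j: "j \<in> S - {i}"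
      have "\<not> open_overlap (a j) (l j) (a i) (l i)" using P2 j i(1) by auto
      moreover have "0 < l i" using P1 i(1) by auto
      moreover have "a j \<le> a i" using amax j by auto
      ultimately have "a j + int (l j) \<le> a i" unfolding open_overlap_def by auto
      then show "0 < l j \<and> y0 \<le> a j \<and> a j + int (l j) \<le> a i" using P1 j by auto
    qed
    have ii: "y0 \<le> a i" "a i + int (l i) \<le> T" using P1 i(1) by auto
    have psub: "S - {i} \<subset> S" using i(1) by auto
    have fS': "finite (S - {i})" using fS by simp
    have P2': "\<forall>x\<in>S - {i}. \<forall>j\<in>S - {i}. x \<noteq> j \<longrightarrow> \<not> open_overlap (a x) (l x) (a j) (l j)"
      using P2 by blast
    have "int (sum l (S - {i})) \<le> a i - y0"
      using psubset.IH[OF psub sub P2' ii(1)] .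
    moreover have "sum l S = l i + sum l (S - {i})"
      using i(1) fS by (simp add: sum.remove)
    ultimately show ?thesis using ii by simp
  qed
qed

lemma sum_list_take_mono:
  fixes xs :: "nat list"
  assumes "j \<le> j'" shows "sum_list (take j xs) \<le> sum_list (take j' xs)"
proof -
  have "take j' xs = take j xs @ take (j' - j) (drop j xs)"
    using take_add[of j "j'-j" xs] assms by simp
  then show ?thesis by simp
qed

lemma sum_list_take_le:
  fixes xs :: "nat list"
  shows "sum_list (take j xs) \<le> sum_list xs"
  by (metis append_take_drop_id le_add1 sum_list_append)

lemma sum_mult_split:
  fixes g :: "nat \<Rightarrow> 'a::comm_monoid_add"
  shows "sum g {..<K*d} = (\<Sum>k<K. \<Sum>j<d. g (k*d+j))"
proof (induction K)
  case 0 then show ?case by simp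
next
  case (Suc K)
  have eq: "{..<Suc K * d} = {..<K*d} \<union> {K*d..<K*d+d}" by auto
  have "sum g {..<Suc K * d} = sum g {..<K*d} + sum g {K*d..<K*d+d}"
    unfolding eq by (rule sum.union_disjoint) auto
  also have "sum g {K*d..<K*d+d} = (\<Sum>j<d. g (K*d+j))"
  proof -
    have e1: "{K*d..<K*d+d} = {0+K*d..<d+K*d}" by (simp add: add.commute)
    have "sum g {0+K*d..<d+K*d} = (\<Sum>j\<in>{0..<d}. g (j+K*d))"
      by (rule sum.shift_bounds_nat_ivl)
    also have "\<dots> = (\<Sum>j<d. g (K*d+j))"
      by (rule sum.cong) (auto simp: ac_simps)
    finally show ?thesis unfolding e1 .
  qed
  finally have c: "sum g {..<Suc K * d} = sum g {..<K*d} + (\<Sum>j<d. g (K*d+j))" .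
  show ?case by (simp only: c sum.lessThan_Suc Suc.IH)
qed

lemma no_ov: "a + int l \<le> c \<Longrightarrow> \<not> open_overlap a l c l' \<and> \<not> open_overlap c l' a l"
  unfolding open_overlap_def by auto



lemma vert:
  fixes q d :: nat and B :: box and I :: "'i set" and P :: "'i \<Rightarrow> box"
  assumes q: "0 < q" and d: "0 < d"
    and fin: "finite I" and pk: "packing B I P"
    and wh: "\<forall>i\<in>I. bw (P i) = 1 \<and> bh B \<le> d * bh (P i)"
    and cq: "card ((\<lambda>i. bh (P i)) ` I) \<le> q"
  shows "\<exists>m C f P'. m \<le> d * (q + 1) ^ d \<and> containers_packed B m C \<and>
               vertical_container_packing I P m C f P' \<and>
               (\<Sum>k<m. area (C k)) = (\<Sum>i\<in>I. area (P i))"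
proof -
  obtain x0 y0 w h where B: "B = (x0, y0, w, h)" by (cases B) auto
  have Bs: "bx B = x0" "by' B = y0" "bw B = w" "bh B = h"
    by (simp_all add: B bx_def by'_def bw_def bh_def)
  define hgt where "hgt i = bh (P i)" for i
  define col where "col i = nat (bx (P i) - x0)" for i
  define S where "S c = {i\<in>I. col i = c}" for c
  define L where "L c = (SOME xs. set xs = S c \<and> distinct xs)" for c
  define H where "H = hgt ` I"
  define Ty where "Ty = {xs. set xs \<subseteq> insert 0 H \<and> length xs = d}"
  define tau where "tau c = map hgt (L c) @ replicate (d - length (L c)) 0" for c
  have finH: "finite H" using fin H_def by simp
  have finTy: "finite Ty" unfolding Ty_def using finH by (simp add: finite_lists_length_eq)
  define K where "K = card Ty"
  obtain E where E: "bij_betw E {0..<K} Ty" using ex_bij_betw_nat_finite[OF finTy] K_def by auto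
  define key where "key c = inv_into {0..<K} E (tau c)" for c
  define A where "A k = card {c'\<in>{..<w}. key c' < k}" for k
  define N where "N k = card {c'\<in>{..<w}. key c' = k}" for k
  define np where "np c = A (key c) + card {c'\<in>{..<c}. key c' = key c}" for c
  define slot where "slot i = inv_into {..<length (L (col i))} (nth (L (col i))) i" for i
  define off where "off xs j = sum_list (take j xs)" for xs :: "nat list" and j
  define C0 where "C0 k j = (if N k = 0 then (x0 + int (A k), y0, 0, 0)
      else (x0 + int (A k), y0 + int (off (E k) j), N k, E k ! j))" for k j
  define C where "C n = C0 (n div d) (n mod d)" for n
  define f where "f i = key (col i) * d + slot i" for i
  define P' where "P' i = (x0 + int (np (col i)), y0 + int (off (tau (col i)) (slot i)), 1::nat, hgt i)" for i
  define m where "m = K * d"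

  have F1: "col i < w" "bx (P i) = x0 + int (col i)" "0 < hgt i"
     "y0 \<le> by' (P i)" "by' (P i) + int (hgt i) \<le> y0 + int h" "hgt i \<le> h" if "i \<in> I" for i
  proof -
    have "0 < bw (P i) \<and> 0 < bh (P i) \<and> inside (P i) B" using pk that unfolding packing_def by blast
    moreover have "bw (P i) = 1" using wh that by blast
    ultimately show "col i < w" "bx (P i) = x0 + int (col i)" "0 < hgt i"
     "y0 \<le> by' (P i)" "by' (P i) + int (hgt i) \<le> y0 + int h" "hgt i \<le> h"
      unfolding inside_def Bs col_def hgt_def by auto
  qed
  have finS: "finite (S c)" for c unfolding S_def using fin by simp
  have F3: "sum hgt (S c) \<le> h" for c
  proof -
    have "int (sum hgt (S c)) \<le> (y0 + int h) - y0"
    proof (rule intervals_sum[where a = "\<lambda>i. by' (P i)"])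
      show "finite (S c)" by (rule finS)
      show "\<forall>i\<in>S c. 0 < hgt i \<and> y0 \<le> by' (P i) \<and> by' (P i) + int (hgt i) \<le> y0 + int h"
        using F1 unfolding S_def by auto
      show "y0 \<le> y0 + int h" by simp
      show "\<forall>i\<in>S c. \<forall>j\<in>S c. i \<noteq> j \<longrightarrow> \<not> open_overlap (by' (P i)) (hgt i) (by' (P j)) (hgt j)"
      proof (intro ballI impI)
        fix i j assume ij: "i \<in> S c" "j \<in> S c" "i \<noteq> j"
        then have "interiors_disjoint (P i) (P j)" using pk unfolding packing_def S_def by blast
        moreover have "bx (P i) = bx (P j)" "bw (P i) = 1" "bw (P j) = 1"
          using ij F1 wh unfolding S_def by auto
        ultimately show "\<not> open_overlap (by' (P i)) (hgt i) (by' (P j)) (hgt j)"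
          unfolding interiors_disjoint_def open_overlap_def hgt_def by auto
      qed
    qed
    then show ?thesis by linarith
  qed
  have F4: "card (S c) \<le> d" for c
  proof (cases "S c = {}")
    case True then show ?thesis by simp
  next
    case False
    then obtain i where i: "i \<in> S c" by auto
    then have hpos: "0 < h" using F1[of i] unfolding S_def by auto
    have "card (S c) * h = (\<Sum>i\<in>S c. h)" by simp
    also have "\<dots> \<le> (\<Sum>i\<in>S c. d * hgt i)"
      by (rule sum_mono) (use wh Bs in \<open>auto simp: S_def hgt_def\<close>)
    also have "\<dots> = d * sum hgt (S c)" by (simp add: sum_distrib_left)
    also have "\<dots> \<le> d * h" using F3 by simp
    finally show ?thesis using hpos by simp
  qed
  have F5: "set (L c) = S c" "distinct (L c)" for c
  proof -
    have "\<exists>xs. set xs = S c \<and> distinct xs" using finite_distinct_list[OF finS] .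
    then have "set (L c) = S c \<and> distinct (L c)" unfolding L_def by (rule someI_ex)
    then show "set (L c) = S c" "distinct (L c)" by auto
  qed
  have lenL: "length (L c) \<le> d" for c using F4 F5 distinct_card by metis
  have F6: "tau c \<in> Ty" "length (tau c) = d" for c
  proof -
    have "set (map hgt (L c)) \<subseteq> H" using F5 unfolding H_def S_def by auto
    then show "tau c \<in> Ty" "length (tau c) = d" unfolding Ty_def tau_def using lenL[of c] by auto
  qed
  have keyK: "key c < K" "E (key c) = tau c" for c
  proof -
    have "tau c \<in> E ` {0..<K}" using F6 E by (auto simp: bij_betw_def)
    then have "key c \<in> {0..<K}" "E (key c) = tau c" unfolding key_def
      by (rule inv_into_into, rule f_inv_into_f)
    then show "key c < K" "E (key c) = tau c" by auto
  qed
  have F7: "slot i < length (L (col i))" "L (col i) ! slot i = i" if "i \<in> I" for i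
  proof -
    have inL: "i \<in> set (L (col i))" using F5 that unfolding S_def by auto
    then have "i \<in> nth (L (col i)) ` {..<length (L (col i))}" by (force simp: in_set_conv_nth image_iff)
    then have "slot i \<in> {..<length (L (col i))}" "L (col i) ! slot i = i"
      unfolding slot_def by (rule inv_into_into, rule f_inv_into_f)
    then show "slot i < length (L (col i))" "L (col i) ! slot i = i" by auto
  qed
  have F7b: "tau (col i) ! slot i = hgt i" "slot i < d" if "i \<in> I" for i
    using F7[OF that] lenL[of "col i"] unfolding tau_def by (auto simp: nth_append)
  have F8: "sum_list (tau c) = sum hgt (S c)" for c
    using F5[of c] unfolding tau_def by (simp add: sum.distinct_set_conv_list[symmetric] sum_list_replicate)
  have NP1: "A (key c) \<le> np c" "np c < A (key c) + N (key c)" if "c < w" for c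
  proof -
    show "A (key c) \<le> np c" unfolding np_def by simp
    have "{c'\<in>{..<c}. key c' = key c} \<subset> {c'\<in>{..<w}. key c' = key c}" using that by auto
    then have "card {c'\<in>{..<c}. key c' = key c} < N (key c)" unfolding N_def
      by (rule psubset_card_mono[rotated]) simp
    then show "np c < A (key c) + N (key c)" unfolding np_def by simp
  qed
  have NP2: "np c \<noteq> np c'" if "c < w" "c' < w" "c \<noteq> c'" "key c = key c'" for c c'
  proof -
    have *: "np a < np b" if "a < b" "key a = key b" for a b
    proof -
      have "{c''\<in>{..<a}. key c'' = key a} \<subset> {c''\<in>{..<b}. key c'' = key b}" using that by auto
      then have "card {c''\<in>{..<a}. key c'' = key a} < card {c''\<in>{..<b}. key c'' = key b}"
        by (rule psubset_card_mono[rotated]) simp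
      then show ?thesis unfolding np_def using that by simp
    qed
    show ?thesis using that *[of c c'] *[of c' c] by (cases "c < c'") auto
  qed
  have AN1: "A k + N k \<le> A k'" if "k < k'" for k k'
  proof -
    have "A k + N k = card ({c'\<in>{..<w}. key c' < k} \<union> {c'\<in>{..<w}. key c' = k})"
      unfolding A_def N_def by (rule card_Un_disjoint[symmetric]) auto
    also have "\<dots> \<le> A k'" unfolding A_def by (rule card_mono) (use that in auto)
    finally show ?thesis .
  qed
  have AN2: "A k + N k \<le> w" for k
  proof -
    have "A k + N k = card ({c'\<in>{..<w}. key c' < k} \<union> {c'\<in>{..<w}. key c' = k})"
      unfolding A_def N_def by (rule card_Un_disjoint[symmetric]) auto
    also have "\<dots> \<le> card {..<w}" by (rule card_mono) auto
    finally show ?thesis by simp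
  qed
  have Npos: "\<exists>c<w. key c = k" if "N k \<noteq> 0" for k
    using that unfolding N_def by (metis (mono_tags, lifting) Collect_empty_eq card.empty lessThan_iff)
  have offs: "off xs j + xs ! j = off xs (Suc j)" if "j < length xs" for xs j
    unfolding off_def using that by (simp add: take_Suc_conv_app_nth)
  have offm: "off xs j \<le> off xs j'" if "j \<le> j'" for xs j j'
    unfolding off_def using that by (rule sum_list_take_mono)
  have offl: "off xs j \<le> sum_list xs" for xs j unfolding off_def by (rule sum_list_take_le)
  have ETy: "E k \<in> Ty" if "k < K" for k using E that by (auto simp: bij_betw_def)
  have lenE: "length (E k) = d" if "k < K" for k using ETy[OF that] unfolding Ty_def by simp

  have Cdm: "C (k * d + j) = C0 k j" if "j < d" for k j unfolding C_def using that d by simp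

  have mbound: "m \<le> d * (q + 1) ^ d"
  proof -
    have "K = card (insert 0 H) ^ d" unfolding K_def Ty_def using finH by (simp add: card_lists_length_eq)
    moreover have "card (insert 0 H) \<le> q + 1"
    proof -
      have "card H \<le> q" using cq unfolding H_def hgt_def by simp
      moreover have "card (insert 0 H) \<le> card H + 1" using finH by (simp add: card_insert_if)
      ultimately show ?thesis by linarith
    qed
    ultimately have "K \<le> (q+1)^d" by (simp add: power_mono)
    then show ?thesis unfolding m_def by (simp add: mult.commute)
  qed

  have FD: "f i div d = key (col i)" "f i mod d = slot i" if "i \<in> I" for i
    unfolding f_def using F7b[OF that] by auto
  have VP: "vertical_container_packing I P m C f P'"
    unfolding vertical_container_packing_def
  proof (intro conjI ballI impI)
    fix i assume i: "i \<in> I"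
    let ?c = "col i" let ?k = "key (col i)"
    have fi: "f i div d = ?k" "f i mod d = slot i" unfolding f_def using F7b[OF i] by auto
    have "f i < key ?c * d + d" unfolding f_def using F7b[OF i] by simp
    also have "\<dots> = Suc (key ?c) * d" by simp
    also have "\<dots> \<le> K * d" using keyK[of ?c] by (intro mult_le_mono1) simp
    finally show "f i < m" unfolding m_def .
    show "bw (P' i) = bw (P i)" using wh i by (simp add: P'_def bw_def)
    show "bh (P' i) = bh (P i)" by (simp add: P'_def bh_def hgt_def)
    have Nk: "N ?k \<noteq> 0" using NP1[OF F1(1)[OF i]] by simp
    have CC: "C (f i) = (x0 + int (A ?k), y0 + int (off (tau ?c) (slot i)), N ?k, tau ?c ! slot i)"
      unfolding C_def fi C0_def using Nk keyK by simp
    show "inside (P' i) (C (f i))"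
      unfolding CC inside_def using NP1[OF F1(1)[OF i]] F7b[OF i]
      by (simp add: P'_def bx_def by'_def bw_def bh_def)
  next
    fix i j assume ij: "i \<in> I" "j \<in> I" "i \<noteq> j \<and> f i = f j"
    have kk: "key (col i) = key (col j)" using FD(1)[OF ij(1)] FD(1)[OF ij(2)] ij(3) by simp
    have ss: "slot i = slot j" using FD(2)[OF ij(1)] FD(2)[OF ij(2)] ij(3) by simp
    have "col i \<noteq> col j" using F7 ij ss by metis
    then have "np (col i) \<noteq> np (col j)" using NP2 kk F1 ij by blast
    then show "\<not> open_overlap (bx (P' i)) (bw (P' i)) (bx (P' j)) (bw (P' j))"
      by (simp add: P'_def bx_def bw_def open_overlap_def)
  qed

  have CP: "containers_packed B m C"
    unfolding containers_packed_def
  proof (intro conjI allI impI)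
    fix n assume n: "n < m"
    let ?k = "n div d" let ?j = "n mod d"
    have kK: "?k < K" using n unfolding m_def by (simp add: less_mult_imp_div_less)
    have jd: "?j < d" using d by simp
    show "inside (C n) B"
    proof (cases "N ?k = 0")
      case True then show ?thesis
        unfolding C_def C0_def inside_def Bs using AN2[of ?k]
        by (simp add: bx_def by'_def bw_def bh_def)
    next
      case False
      then obtain c where c: "c < w" "key c = ?k" using Npos by blast
      have "off (E ?k) ?j + E ?k ! ?j \<le> h"
        using offs[of ?j "E ?k"] lenE[OF kK] jd offl[of "E ?k" "Suc ?j"] keyK(2)[of c] c F8 F3[of c]
        by simp
      then show ?thesis unfolding C_def C0_def inside_def Bs using AN2[of ?k] False
        by (simp add: bx_def by'_def bw_def bh_def)
    qed
  next
    fix n n' assume nn: "n < m" "n' < m" "n \<noteq> n'"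
    let ?k = "n div d" let ?j = "n mod d"
    let ?k' = "n' div d" let ?j' = "n' mod d"
    have kK: "?k < K" "?k' < K" using nn unfolding m_def by (simp_all add: less_mult_imp_div_less)
    have jd: "?j < d" "?j' < d" using d by simp_all
    have xw: "bx (C n) = x0 + int (A ?k)" "bw (C n) \<le> N ?k"
      "bx (C n') = x0 + int (A ?k')" "bw (C n') \<le> N ?k'"
      unfolding C_def C0_def by (simp_all add: bx_def bw_def)
    show "interiors_disjoint (C n) (C n')"
    proof (cases "?k = ?k'")
      case False
      show ?thesis
      proof (cases "?k < ?k'")
        case True
        then have "bx (C n) + int (bw (C n)) \<le> bx (C n')" using AN1[OF True] xw by simp
        then show ?thesis unfolding interiors_disjoint_def using no_ov by blast
      next
        case False'': False
        then have "?k' < ?k" using False by simp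
        then have "bx (C n') + int (bw (C n')) \<le> bx (C n)" using AN1[of ?k' ?k] xw by simp
        then show ?thesis unfolding interiors_disjoint_def using no_ov by blast
      qed
    next
      case True
      then have jj: "?j \<noteq> ?j'" using nn by (metis div_mod_decomp)
      show ?thesis
      proof (cases "N ?k = 0")
        case Nz: True
        then show ?thesis unfolding C_def C0_def interiors_disjoint_def open_overlap_def True
          by (simp add: by'_def bh_def)
      next
        case Nz: False
        have yy: "by' (C n) = y0 + int (off (E ?k) ?j)" "bh (C n) = E ?k ! ?j"
          "by' (C n') = y0 + int (off (E ?k) ?j')" "bh (C n') = E ?k ! ?j'"
          unfolding C_def C0_def using Nz True by (simp_all add: by'_def bh_def)
        show ?thesis
        proof (cases "?j < ?j'")
          case lt: True
          have "off (E ?k) ?j + E ?k ! ?j \<le> off (E ?k) ?j'"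
            using offs[of ?j "E ?k"] lenE[OF kK(1)] jd offm[of "Suc ?j" ?j' "E ?k"] lt by simp
          then have "by' (C n) + int (bh (C n)) \<le> by' (C n')" using yy by simp
          then show ?thesis unfolding interiors_disjoint_def using no_ov by blast
        next
          case False
          then have lt: "?j' < ?j" using jj by simp
          have "off (E ?k) ?j' + E ?k ! ?j' \<le> off (E ?k) ?j"
            using offs[of ?j' "E ?k"] lenE[OF kK(1)] jd offm[of "Suc ?j'" ?j "E ?k"] lt by simp
          then have "by' (C n') + int (bh (C n')) \<le> by' (C n)" using yy by simp
          then show ?thesis unfolding interiors_disjoint_def using no_ov by blast
        qed
      qed
    qed
  qed

  have AR: "(\<Sum>k<m. area (C k)) = (\<Sum>i\<in>I. area (P i))"
  proof -
    have "(\<Sum>k<m. area (C k)) = (\<Sum>k<K. \<Sum>j<d. area (C (k*d+j)))"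
      unfolding m_def by (rule sum_mult_split)
    also have "\<dots> = (\<Sum>k<K. N k * sum_list (E k))"
    proof (rule sum.cong[OF refl])
      fix k assume k: "k \<in> {..<K}"
      have "(\<Sum>j<d. area (C (k*d+j))) = (\<Sum>j<d. N k * (E k ! j))"
        by (rule sum.cong[OF refl]) (simp add: Cdm C0_def area_def bw_def bh_def)
      also have "\<dots> = N k * sum_list (E k)"
        using lenE[of k] k by (simp add: sum_distrib_left sum_list_sum_nth atLeast0LessThan)
      finally show "(\<Sum>j<d. area (C (k*d+j))) = N k * sum_list (E k)" .
    qed
    also have "\<dots> = (\<Sum>k<K. \<Sum>c\<in>{c\<in>{..<w}. key c = k}. sum_list (tau c))"
    proof (rule sum.cong[OF refl])
      fix k
      have "(\<Sum>c\<in>{c\<in>{..<w}. key c = k}. sum_list (tau c)) = (\<Sum>c\<in>{c\<in>{..<w}. key c = k}. sum_list (E k))"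
        by (rule sum.cong[OF refl]) (use keyK in auto)
      then show "N k * sum_list (E k) = (\<Sum>c\<in>{c\<in>{..<w}. key c = k}. sum_list (tau c))"
        unfolding N_def by simp
    qed
    also have "\<dots> = (\<Sum>c<w. sum_list (tau c))"
      by (rule sum.group) (use keyK in auto)
    also have "\<dots> = (\<Sum>c<w. sum hgt (S c))" by (simp add: F8)
    also have "\<dots> = sum hgt I"
      unfolding S_def by (rule sum.group) (use fin F1 in auto)
    also have "\<dots> = (\<Sum>i\<in>I. area (P i))"
      by (rule sum.cong[OF refl]) (use wh in \<open>simp add: area_def hgt_def\<close>)
    finally show ?thesis .
  qed
  show ?thesis
    by (rule exI[of _ m], rule exI[of _ C], rule exI[of _ f], rule exI[of _ P'])
      (intro conjI mbound CP VP AR)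
qed



definition tr :: "box \<Rightarrow> box" where "tr b = (by' b, bx b, bh b, bw b)"

lemma tr_sel[simp]: "bx (tr b) = by' b" "by' (tr b) = bx b" "bw (tr b) = bh b" "bh (tr b) = bw b"
  by (simp_all add: tr_def bx_def by'_def bw_def bh_def)

lemma tr_tr[simp]: "tr (tr b) = b"
  by (cases b) (simp add: tr_def bx_def by'_def bw_def bh_def)

lemma tr_inside[simp]: "inside (tr a) (tr b) = inside a b"
  unfolding inside_def by auto

lemma tr_disj[simp]: "interiors_disjoint (tr a) (tr b) = interiors_disjoint a b"
  unfolding interiors_disjoint_def by auto

lemma tr_area[simp]: "area (tr b) = area b"
  unfolding area_def by simp

lemma horiz:
  fixes q d :: nat and B :: box and I :: "'i set" and P :: "'i \<Rightarrow> box"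
  assumes q: "0 < q" and d: "0 < d"
    and fin: "finite I" and pk: "packing B I P"
    and wh: "\<forall>i\<in>I. bh (P i) = 1 \<and> bw B \<le> d * bw (P i)"
    and cq: "card ((\<lambda>i. bw (P i)) ` I) \<le> q"
  shows "\<exists>m C f P'. m \<le> d * (q + 1) ^ d \<and> containers_packed B m C \<and>
               horizontal_container_packing I P m C f P' \<and>
               (\<Sum>k<m. area (C k)) = (\<Sum>i\<in>I. area (P i))"
proof -
  have pk': "packing (tr B) I (\<lambda>i. tr (P i))" using pk unfolding packing_def by simp
  have wh': "\<forall>i\<in>I. bw (tr (P i)) = 1 \<and> bh (tr B) \<le> d * bh (tr (P i))" using wh by simp
  have cq': "card ((\<lambda>i. bh (tr (P i))) ` I) \<le> q" using cq by simp
  obtain m C f P' where m: "m \<le> d * (q + 1) ^ d" and cp: "containers_packed (tr B) m C"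
    and vp: "vertical_container_packing I (\<lambda>i. tr (P i)) m C f P'"
    and ar: "(\<Sum>k<m. area (C k)) = (\<Sum>i\<in>I. area (tr (P i)))"
    using vert[OF q d fin pk' wh' cq'] by blast
  have cp': "containers_packed B m (\<lambda>k. tr (C k))"
    using cp unfolding containers_packed_def
    by (metis tr_disj tr_inside tr_tr)
  have hp: "horizontal_container_packing I P m (\<lambda>k. tr (C k)) f (\<lambda>i. tr (P' i))"
    using vp unfolding vertical_container_packing_def horizontal_container_packing_def
    by (metis tr_inside tr_sel tr_tr)
  have ar': "(\<Sum>k<m. area (tr (C k))) = (\<Sum>i\<in>I. area (P i))" using ar by simp
  show ?thesis
    by (rule exI[of _ m], rule exI[of _ "\<lambda>k. tr (C k)"], rule exI[of _ f], rule exI[of _ "\<lambda>i. tr (P' i)"])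
      (intro conjI m cp' hp ar')
qed

theorem lemma10:
  fixes q d :: nat
  assumes "0 < q" and "0 < d"
  shows "(\<forall>(B::box) (I::'i set) (P::'i \<Rightarrow> box).
            finite I \<and> packing B I P \<and>
            (\<forall>i\<in>I. bw (P i) = 1 \<and> bh B \<le> d * bh (P i)) \<and>
            card ((\<lambda>i. bh (P i)) ` I) \<le> q \<longrightarrow>
            (\<exists>m C f P'. m \<le> d * (q + 1) ^ d \<and> containers_packed B m C \<and>
               vertical_container_packing I P m C f P' \<and>
               (\<Sum>k<m. area (C k)) = (\<Sum>i\<in>I. area (P i))))
       \<and> (\<forall>(B::box) (I::'i set) (P::'i \<Rightarrow> box).
            finite I \<and> packing B I P \<and>
            (\<forall>i\<in>I. bh (P i) = 1 \<and> bw B \<le> d * bw (P i)) \<and>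
            card ((\<lambda>i. bw (P i)) ` I) \<le> q \<longrightarrow>
            (\<exists>m C f P'. m \<le> d * (q + 1) ^ d \<and> containers_packed B m C \<and>
               horizontal_container_packing I P m C f P' \<and>
               (\<Sum>k<m. area (C k)) = (\<Sum>i\<in>I. area (P i))))"
    using vert[OF assms] horiz[OF assms] by blast

end
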